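(* Let $\mu_1,\mu_2$ be finite nonnegative Borel measures on $\mathcal{C}_*$ such that $\mu_1(\mathcal{E}^z)=\mu_2(\mathcal{E}^z)$ for all $z\in\chi$. Then $\mu_1=\mu_2$.
   Context: $\mathbb{S}=\mathbb{R}/\mathbb{Z}$; $\mathcal{C}_*=\mathcal{C}(\mathbb{S};[0,1])\setminus\{\mathbf0,\mathbf1\}$ with the uniform norm (continuous functions $\mathbb{S}\to[0,1]$ other than the constants $0$ and $1$). $\chi=(\bigcup_{n\ge1}\mathbb{S}^n/\sim)\times(\bigcup_{m\ge1}\mathbb{S}^m/\sim)$, where $\sim$ identifies tuples differing by a permutation of coordinates. For $f:\mathbb{S}\to[0,1]$ Borel and $z=((x_1,\dots,x_n),(y_1,\dots,y_m))\in\chi$, $\mathcal{E}^z(f)=\mathcal{E}(f,z)=\big[\prod_{i=1}^n(1-f(x_i))\big]\big[1-\prod_{j=1}^m(1-f(y_j))\big]$, and $\mu(\mathcal{E}^z)=\int\mathcal{E}^z(f)\,\mu(df)$. *)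

theory Defs
  imports "HOL-Analysis.Analysis"
begin

text \<open>The circle S = R/Z is represented by 1-periodic functions on the reals.\<close>

definition Cstar :: "(real \<Rightarrow>\<^sub>C real) set" where
  "Cstar = {f. (\<forall>x. apply_bcontfun f (x + 1) = apply_bcontfun f x)
              \<and> (\<forall>x. 0 \<le> apply_bcontfun f x \<and> apply_bcontfun f x \<le> 1)
              \<and> (\<exists>x. apply_bcontfun f x \<noteq> 0) \<and> (\<exists>x. apply_bcontfun f x \<noteq> 1)}"

text \<open>z = (xs, ys): nonempty finite families of points of S (given by real
  representatives; order is irrelevant since only products occur).\<close>

definition calE :: "real list \<Rightarrow> real list \<Rightarrow> (real \<Rightarrow>\<^sub>C real) \<Rightarrow> real" where
  "calE xs ys f = prod_list (map (\<lambda>x. 1 - apply_bcontfun f x) xs)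
                  * (1 - prod_list (map (\<lambda>y. 1 - apply_bcontfun f y) ys))"

end

theory Submission
  imports Defs
begin


lemma periodic_nat:
  fixes h :: "real \<Rightarrow> real"
  assumes per: "\<forall>x. h (x + 1) = (h x :: real)"
  shows "h (x + real n) = h x \<and> h (x - real n) = h x"
proof (induction n arbitrary: x)
  case 0 then show ?case by simp
next
  case (Suc n)
  have a: "h (x + real (Suc n)) = h (x + real n)"
    using per[rule_format, of "x + real n"] by (simp add: algebra_simps)
  have b: "h (x - real (Suc n)) = h (x - real n)"
    using per[rule_format, of "x - real (Suc n)"] by (simp add: algebra_simps)
  show ?case using a b Suc by simp
qed

lemma periodic_frac:
  fixes h :: "real \<Rightarrow> real"
  assumes per: "\<forall>x. h (x + 1) = (h x :: real)"
  shows "h (frac x) = h x"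
proof (cases "\<lfloor>x\<rfloor> \<ge> 0")
  case True
  then obtain n where n: "\<lfloor>x\<rfloor> = int n" using nonneg_eq_int by blast
  have "frac x = x - real n" by (simp add: frac_def n)
  then show ?thesis using periodic_nat[OF per, of "frac x" n] by simp
next
  case False
  then obtain n where n: "\<lfloor>x\<rfloor> = - int n" by (metis minus_minus neg_0_le_iff_le nonneg_eq_int linorder_not_le less_imp_le)
  have "frac x = x + real n" by (simp add: frac_def n)
  then show ?thesis using periodic_nat[OF per, of "frac x" n] by simp
qed

lemma prod_list_01:
  fixes h :: "real \<Rightarrow> real"
  assumes "\<forall>y. 0 \<le> h y \<and> h y \<le> 1"
  shows "0 \<le> prod_list (map h l) \<and> prod_list (map h l) \<le> 1"
proof (induction l)
  case (Cons a l)
  have "0 \<le> h a" "h a \<le> 1" using assms by auto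
  then show ?case using Cons mult_le_one[of "h a" "prod_list (map h l)"] by simp
qed simp

lemma prod_list_le_member:
  fixes h :: "real \<Rightarrow> real"
  assumes "\<forall>y. 0 \<le> h y \<and> h y \<le> 1" "z \<in> set l"
  shows "prod_list (map h l) \<le> h z"
  using assms(2)
proof (induction l)
  case Nil then show ?case by simp
next
  case (Cons a l)
  have p: "0 \<le> prod_list (map h l)" "prod_list (map h l) \<le> 1" using prod_list_01[OF assms(1)] by auto
  have ha: "0 \<le> h a" "h a \<le> 1" using assms(1) by auto
  show ?case
  proof (cases "z = a")
    case True
    have "h a * prod_list (map h l) \<le> h a * 1" using p ha by (intro mult_left_mono) auto
    then show ?thesis using True by simp
  next
    case False then have "prod_list (map h l) \<le> h z" using Cons by auto
    moreover have "h a * prod_list (map h l) \<le> 1 * prod_list (map h l)" using p ha by (intro mult_right_mono) auto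
    ultimately show ?thesis by simp
  qed
qed

lemma prod_list_concat_replicate:
  "prod_list (map h (concat (replicate k l))) = prod_list (map h l) ^ k"
  by (induction k) auto

definition grid :: "nat \<Rightarrow> real list" where
  "grid k = concat (replicate k (map (\<lambda>j. real j / real k) [0..<k]))"

lemma grid_limit:
  fixes h :: "real \<Rightarrow> real"
  assumes cont: "continuous_on UNIV h" and per: "\<forall>x. h (x + 1) = h x"
    and rng: "\<forall>x. 0 \<le> h x \<and> h x \<le> 1" and ex: "\<exists>x. h x \<noteq> 1"
  shows "(\<lambda>k. prod_list (map h (grid k))) \<longlonglongrightarrow> 0"
proof -
  obtain x0 where "h x0 \<noteq> 1" using ex by blast
  define x1 where "x1 = frac x0"
  have hx1: "h x1 < 1" using \<open>h x0 \<noteq> 1\<close> rng periodic_frac[OF per, of x0] unfolding x1_def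
    by (metis order_le_less)
  have x1: "0 \<le> x1" "x1 < 1" unfolding x1_def by (auto simp: frac_lt_1)
  define d where "d = (1 - h x1) / 2"
  have d: "0 < d" "d \<le> 1/2" using hx1 rng unfolding d_def by auto
  obtain \<eta> where eta: "\<eta> > 0" "\<And>x. dist x x1 < \<eta> \<Longrightarrow> dist (h x) (h x1) < d"
    using cont d(1) unfolding continuous_on_iff by blast
  obtain N :: nat where N: "1 / \<eta> < real N" using reals_Archimedean2 by blast
  have ev: "\<forall>\<^sub>F k in sequentially. prod_list (map h (grid k)) \<le> (1 - d) ^ k"
    unfolding eventually_sequentially
  proof (intro exI[of _ "Suc N"] allI impI)
    fix k assume k: "Suc N \<le> k"
    then have kpos: "real k > 0" by simp
    define j where "j = nat \<lfloor>real k * x1\<rfloor>"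
    have fl0: "0 \<le> \<lfloor>real k * x1\<rfloor>" using x1 by simp
    have jle: "real j \<le> real k * x1" unfolding j_def using fl0 by linarith
    have jgt: "real k * x1 < real j + 1" unfolding j_def using fl0 by linarith
    have "real k * x1 < real k" using x1 kpos by simp
    then have jk: "j < k" using jle by linarith
    have "dist (real j / real k) x1 < \<eta>"
    proof -
      have "\<bar>real j / real k - x1\<bar> = \<bar>real j - real k * x1\<bar> / real k"
        using kpos by (simp add: field_simps)
      also have "\<dots> < 1 / real k" using jle jgt kpos by (simp add: divide_strict_right_mono)
      also have "\<dots> \<le> 1 / real N"
      proof -
        have "0 < real N" using N eta(1) by (smt (verit) divide_pos_pos)
        then show ?thesis using k by (simp add: frac_le)
      qed
      also have "\<dots> < \<eta>" using N eta(1)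
        by (smt (verit, ccfv_threshold) divide_less_eq divide_pos_pos mult.commute)
      finally show ?thesis by (simp add: dist_real_def)
    qed
    then have "dist (h (real j / real k)) (h x1) < d" by (rule eta(2))
    then have "h (real j / real k) - h x1 < d" by (simp add: dist_real_def abs_less_iff)
    then have hj: "h (real j / real k) < 1 - d"
      unfolding d_def by (simp add: field_simps)
    have mem: "real j / real k \<in> set (map (\<lambda>j. real j / real k) [0..<k])" using jk by auto
    have "prod_list (map h (map (\<lambda>j. real j / real k) [0..<k])) \<le> 1 - d"
      using prod_list_le_member[OF rng mem] hj by simp
    moreover have "0 \<le> prod_list (map h (map (\<lambda>j. real j / real k) [0..<k]))"
      using prod_list_01[OF rng, of "map (\<lambda>j. real j / real k) [0..<k]"] by simp
    ultimately have "prod_list (map h (map (\<lambda>j. real j / real k) [0..<k])) ^ k \<le> (1 - d) ^ k"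
      by (intro power_mono) auto
    then show "prod_list (map h (grid k)) \<le> (1 - d) ^ k"
      unfolding grid_def prod_list_concat_replicate .
  qed
  have ev0: "\<forall>\<^sub>F k in sequentially. 0 \<le> prod_list (map h (grid k))"
    using prod_list_01[OF rng] by simp
  have lim: "(\<lambda>k. (1 - d) ^ k) \<longlonglongrightarrow> 0" using d by (intro LIMSEQ_realpow_zero) auto
  show ?thesis by (rule tendsto_sandwich[OF ev0 ev tendsto_const lim])
qed


lemma bounded_integrable:
  fixes f :: "'a \<Rightarrow> real"
  assumes "finite_measure M" "f \<in> borel_measurable M" "\<And>x. x \<in> space M \<Longrightarrow> \<bar>f x\<bar> \<le> B"
  shows "integrable M f"
  using assms by (intro finite_measure.integrable_const_bound[where B=B]) (auto intro: AE_I2)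

lemma small_imp_zero:
  fixes d c :: real
  assumes "c \<ge> 0" "\<And>e. e > 0 \<Longrightarrow> \<bar>d\<bar> \<le> e * c"
  shows "d = 0"
proof (rule ccontr)
  assume "d \<noteq> 0"
  define e where "e = \<bar>d\<bar> / (2 * (c + 1))"
  have e: "e > 0" using \<open>d \<noteq> 0\<close> assms(1) by (simp add: e_def)
  have "\<bar>d\<bar> \<le> e * c" by (rule assms(2)[OF e])
  also have "\<dots> \<le> e * (c + 1)" using e by simp
  also have "\<dots> = \<bar>d\<bar> / 2" using assms(1) by (simp add: e_def field_simps)
  finally show False using \<open>d \<noteq> 0\<close> by simp
qed

lemma int_T:
  fixes M :: "'a measure" and X K :: "'a \<Rightarrow> real"
  assumes fm: "finite_measure M" and XM: "X \<in> borel_measurable M" and KM: "K \<in> borel_measurable M"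
   and X01: "\<forall>f\<in>space M. 0 \<le> X f \<and> X f \<le> 1"
   and K01: "\<forall>f\<in>space M. 0 \<le> K f \<and> K f \<le> 1"
  shows "integrable M (\<lambda>f. X f ^ k * (1 - X f) ^ m * K f)"
proof (rule bounded_integrable[OF fm, where B=1])
  show "(\<lambda>f. X f ^ k * (1 - X f) ^ m * K f) \<in> borel_measurable M" using XM KM by measurable
  fix f assume "f \<in> space M"
  then have a: "0 \<le> X f" "X f \<le> 1" "0 \<le> K f" "K f \<le> 1" using X01 K01 by auto
  have "0 \<le> X f ^ k" "X f ^ k \<le> 1" "0 \<le> (1 - X f) ^ m" "(1 - X f) ^ m \<le> 1"
    using a by (auto intro: power_le_one)
  then have "0 \<le> X f ^ k * (1 - X f) ^ m" "X f ^ k * (1 - X f) ^ m \<le> 1" by (auto intro: mult_le_one)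
  then have "0 \<le> X f ^ k * (1 - X f) ^ m * K f" "X f ^ k * (1 - X f) ^ m * K f \<le> 1"
    using a by (auto intro: mult_le_one)
  then show "\<bar>X f ^ k * (1 - X f) ^ m * K f\<bar> \<le> 1" by simp
qed

lemma est_one:
  fixes M :: "'a measure" and X K :: "'a \<Rightarrow> real" and \<phi> :: "real \<Rightarrow> real"
  assumes fm: "finite_measure M" and XM: "X \<in> borel_measurable M" and KM: "K \<in> borel_measurable M"
   and X01: "\<forall>f\<in>space M. 0 \<le> X f \<and> X f \<le> 1"
   and K01: "\<forall>f\<in>space M. 0 \<le> K f \<and> K f \<le> 1"
   and cont: "continuous_on UNIV \<phi>" and bnd: "\<And>t. \<bar>\<phi> t\<bar> \<le> C"
   and ap: "\<forall>x\<in>{0..1}. \<bar>\<phi> x - (\<Sum>k\<le>n. \<phi> (real k / real n) * Bernstein n k x)\<bar> < e"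
  shows "\<bar>(\<integral>f. \<phi> (X f) * K f \<partial>M) - (\<Sum>k\<le>n. \<phi> (real k / real n) * real (n choose k) *
            (\<integral>f. X f ^ k * (1 - X f) ^ (n - k) * K f \<partial>M))\<bar> \<le> e * measure M (space M)"
proof -
  have phim: "\<phi> \<in> borel_measurable borel" using cont by (rule borel_measurable_continuous_onI)
  define S where "S = (\<lambda>x. \<Sum>k\<le>n. \<phi> (real k / real n) * Bernstein n k x)"
  have C0: "0 \<le> C" using bnd[of 0] by linarith
  have m1: "(\<lambda>f. \<phi> (X f) * K f) \<in> borel_measurable M"
    using XM KM phim by measurable
  have m2: "(\<lambda>f. S (X f) * K f) \<in> borel_measurable M"
    using XM KM unfolding S_def Bernstein_def by measurable
  have i1: "integrable M (\<lambda>f. \<phi> (X f) * K f)"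
  proof (rule bounded_integrable[OF fm m1, where B=C])
    fix f assume "f \<in> space M"
    then have "\<bar>K f\<bar> \<le> 1" using K01 by auto
    then show "\<bar>\<phi> (X f) * K f\<bar> \<le> C"
      using bnd[of "X f"] C0 mult_mono[of "\<bar>\<phi> (X f)\<bar>" C "\<bar>K f\<bar>" 1] by (simp add: abs_mult)
  qed
  have iT: "\<And>k m. integrable M (\<lambda>f. X f ^ k * (1 - X f) ^ m * K f)"
    by (rule int_T[OF fm XM KM X01 K01])
  have i2: "integrable M (\<lambda>f. S (X f) * K f)"
  proof -
    have "integrable M (\<lambda>f. \<Sum>k\<le>n. (\<phi> (real k / real n) * real (n choose k)) * (X f ^ k * (1 - X f) ^ (n - k) * K f))"
      by (rule Bochner_Integration.integrable_sum, rule integrable_mult_right, rule iT)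
    moreover have "\<And>f. (\<Sum>k\<le>n. (\<phi> (real k / real n) * real (n choose k)) * (X f ^ k * (1 - X f) ^ (n - k) * K f))
       = S (X f) * K f"
      unfolding S_def Bernstein_def by (simp add: sum_distrib_right sum_distrib_left mult_ac)
    ultimately show ?thesis by simp
  qed
  have eqS: "(\<integral>f. S (X f) * K f \<partial>M) = (\<Sum>k\<le>n. \<phi> (real k / real n) * real (n choose k) *
            (\<integral>f. X f ^ k * (1 - X f) ^ (n - k) * K f \<partial>M))"
  proof -
    have "(\<integral>f. S (X f) * K f \<partial>M) = (\<integral>f. (\<Sum>k\<le>n. (\<phi> (real k / real n) * real (n choose k)) * (X f ^ k * (1 - X f) ^ (n - k) * K f)) \<partial>M)"
      unfolding S_def Bernstein_def by (simp add: sum_distrib_right sum_distrib_left mult_ac)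
    also have "\<dots> = (\<Sum>k\<le>n. \<integral>f. (\<phi> (real k / real n) * real (n choose k)) * (X f ^ k * (1 - X f) ^ (n - k) * K f) \<partial>M)"
      by (rule Bochner_Integration.integral_sum, rule integrable_mult_right, rule iT)
    also have "\<dots> = (\<Sum>k\<le>n. \<phi> (real k / real n) * real (n choose k) *
            (\<integral>f. X f ^ k * (1 - X f) ^ (n - k) * K f \<partial>M))"
      by simp
    finally show ?thesis .
  qed
  have "\<bar>(\<integral>f. \<phi> (X f) * K f \<partial>M) - (\<integral>f. S (X f) * K f \<partial>M)\<bar>
        = \<bar>\<integral>f. (\<phi> (X f) - S (X f)) * K f \<partial>M\<bar>"
    using i1 i2 by (simp add: left_diff_distrib)
  also have "\<dots> \<le> (\<integral>f. \<bar>(\<phi> (X f) - S (X f)) * K f\<bar> \<partial>M)"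
    by (rule integral_abs_bound)
  also have "\<dots> \<le> (\<integral>f. e \<partial>M)"
  proof (rule integral_mono)
    show "integrable M (\<lambda>f. \<bar>(\<phi> (X f) - S (X f)) * K f\<bar>)"
      using i1 i2 by (simp add: left_diff_distrib)
    show "integrable M (\<lambda>f. e)" using fm by (simp add: finite_measure.integrable_const)
    fix f assume "f \<in> space M"
    then have a: "\<bar>K f\<bar> \<le> 1" "X f \<in> {0..1}" using K01 X01 by auto
    then have b: "\<bar>\<phi> (X f) - S (X f)\<bar> \<le> e" using ap unfolding S_def by (auto intro: less_imp_le)
    show "\<bar>(\<phi> (X f) - S (X f)) * K f\<bar> \<le> e"
      using mult_mono[OF b a(1)] b by (simp add: abs_mult)
  qed
  also have "\<dots> = e * measure M (space M)" by simp
  finally show ?thesis unfolding eqS .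
qed


lemma L1_cont:
  fixes M1 M2 :: "'a measure" and X K :: "'a \<Rightarrow> real" and \<phi> :: "real \<Rightarrow> real"
  assumes fm1: "finite_measure M1" and fm2: "finite_measure M2"
   and sets: "sets M1 = sets M2"
   and Xm: "X \<in> borel_measurable M1" and Km: "K \<in> borel_measurable M1"
   and X01: "\<forall>f\<in>space M1. 0 \<le> X f \<and> X f \<le> 1"
   and K01: "\<forall>f\<in>space M1. 0 \<le> K f \<and> K f \<le> 1"
   and mom: "\<And>k m. (\<integral>f. X f ^ k * (1 - X f) ^ m * K f \<partial>M1) = (\<integral>f. X f ^ k * (1 - X f) ^ m * K f \<partial>M2)"
   and cont: "continuous_on UNIV \<phi>" and bnd: "\<And>t. \<bar>\<phi> t\<bar> \<le> C"
  shows "(\<integral>f. \<phi> (X f) * K f \<partial>M1) = (\<integral>f. \<phi> (X f) * K f \<partial>M2)"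
proof -
  have sp: "space M1 = space M2" using sets by (rule sets_eq_imp_space_eq)
  have meas: "measurable M1 borel = measurable M2 borel" using sets by (rule measurable_cong_sets) auto
  have Xm2: "X \<in> borel_measurable M2" and Km2: "K \<in> borel_measurable M2" using Xm Km meas by auto
  have X01': "\<forall>f\<in>space M2. 0 \<le> X f \<and> X f \<le> 1" and K01': "\<forall>f\<in>space M2. 0 \<le> K f \<and> K f \<le> 1"
    using X01 K01 sp by auto
  define m1 where "m1 = measure M1 (space M1)"
  define m2 where "m2 = measure M2 (space M2)"
  have m0: "0 \<le> m1 + m2" unfolding m1_def m2_def by auto
  show ?thesis
  proof (rule eq_iff_diff_eq_0[THEN iffD2], rule small_imp_zero[OF m0])
    fix e :: real assume e: "e > 0"
    obtain N where N: "\<forall>n x. N \<le> n \<and> x \<in> {0..1}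
                    \<longrightarrow> \<bar>\<phi> x - (\<Sum>k\<le>n. \<phi>(real k/real n) * Bernstein n k x)\<bar> < e"
      using Bernstein_Weierstrass[OF continuous_on_subset[OF cont subset_UNIV] e] by blast
    have ap: "\<forall>x\<in>{0..1}. \<bar>\<phi> x - (\<Sum>k\<le>N. \<phi> (real k / real N) * Bernstein N k x)\<bar> < e"
      using N by blast
    note e1 = est_one[OF fm1 Xm Km X01 K01 cont bnd ap]
    note e2 = est_one[OF fm2 Xm2 Km2 X01' K01' cont bnd ap]
    have seq: "(\<Sum>k\<le>N. \<phi> (real k / real N) * real (N choose k) *
            (\<integral>f. X f ^ k * (1 - X f) ^ (N - k) * K f \<partial>M1)) =
          (\<Sum>k\<le>N. \<phi> (real k / real N) * real (N choose k) *
            (\<integral>f. X f ^ k * (1 - X f) ^ (N - k) * K f \<partial>M2))"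
      using mom by simp
    show "\<bar>(\<integral>f. \<phi> (X f) * K f \<partial>M1) - (\<integral>f. \<phi> (X f) * K f \<partial>M2)\<bar> \<le> e * (m1 + m2)"
      using e1 e2 seq unfolding m1_def m2_def distrib_left by linarith
  qed
qed

lemma approx_ind:
  fixes a b t :: real
  shows "(\<lambda>i. max 0 (1 - real i * (max 0 (a - t) + max 0 (t - b)))) \<longlonglongrightarrow> indicator {a..b} t"
proof (cases "t \<in> {a..b}")
  case True
  then have "max 0 (a - t) = 0" "max 0 (t - b) = 0" by auto
  then show ?thesis using True by simp
next
  case False
  define d where "d = max 0 (a - t) + max 0 (t - b)"
  have d: "d > 0" using False unfolding d_def by (auto simp: max_def)
  obtain N :: nat where N: "1 / d < real N" using reals_Archimedean2 by blast
  have "\<forall>\<^sub>F i in sequentially. max 0 (1 - real i * d) = 0"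
    unfolding eventually_sequentially
  proof (intro exI[of _ N] allI impI)
    fix i assume "N \<le> i"
    then have "real N * d \<le> real i * d" using d by (intro mult_right_mono) auto
    moreover have "1 < real N * d" using N d by (simp add: field_simps)
    ultimately show "max 0 (1 - real i * d) = 0" by simp
  qed
  then have "(\<lambda>i. max 0 (1 - real i * d)) \<longlonglongrightarrow> 0" by (rule tendsto_eventually)
  then show ?thesis using False unfolding d_def by simp
qed

lemma L1:
  fixes M1 M2 :: "'a measure" and X K :: "'a \<Rightarrow> real"
  assumes fm1: "finite_measure M1" and fm2: "finite_measure M2"
   and sets: "sets M1 = sets M2"
   and Xm: "X \<in> borel_measurable M1" and Km: "K \<in> borel_measurable M1"
   and X01: "\<forall>f\<in>space M1. 0 \<le> X f \<and> X f \<le> 1"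
   and K01: "\<forall>f\<in>space M1. 0 \<le> K f \<and> K f \<le> 1"
   and mom: "\<And>k m. (\<integral>f. X f ^ k * (1 - X f) ^ m * K f \<partial>M1) = (\<integral>f. X f ^ k * (1 - X f) ^ m * K f \<partial>M2)"
  shows "(\<integral>f. indicator {a..b} (X f) * K f \<partial>M1) = (\<integral>f. indicator {a..b} (X f) * K f \<partial>M2)"
proof -
  have sp: "space M1 = space M2" using sets by (rule sets_eq_imp_space_eq)
  have meas: "measurable M1 borel = measurable M2 borel" using sets by (rule measurable_cong_sets) auto
  have Xm2: "X \<in> borel_measurable M2" and Km2: "K \<in> borel_measurable M2" using Xm Km meas by auto
  have K01': "\<forall>f\<in>space M2. 0 \<le> K f \<and> K f \<le> 1" using K01 sp by auto
  define \<phi> where "\<phi> = (\<lambda>(i::nat) t. max 0 (1 - real i * (max 0 (a - t) + max 0 (t - b))))"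
  have contp: "continuous_on UNIV (\<phi> i)" for i unfolding \<phi>_def by (intro continuous_intros)
  have bndp: "\<bar>\<phi> i t\<bar> \<le> 1" for i t
  proof -
    have "0 \<le> real i * (max 0 (a - t) + max 0 (t - b))" by simp
    then show ?thesis unfolding \<phi>_def by simp
  qed
  have eqs: "(\<integral>f. \<phi> i (X f) * K f \<partial>M1) = (\<integral>f. \<phi> i (X f) * K f \<partial>M2)" for i
    by (rule L1_cont[OF fm1 fm2 sets Xm Km X01 K01 mom contp bndp])
  have lim: "(\<lambda>i. \<integral>f. \<phi> i (X f) * K f \<partial>M) \<longlonglongrightarrow> (\<integral>f. indicator {a..b} (X f) * K f \<partial>M)"
    if fm: "finite_measure M" and XM: "X \<in> borel_measurable M" and KM: "K \<in> borel_measurable M"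
      and KM01: "\<forall>f\<in>space M. 0 \<le> K f \<and> K f \<le> 1" for M
  proof (rule integral_dominated_convergence[where w="\<lambda>_. 1"])
    show "(\<lambda>f. indicator {a..b} (X f) * K f) \<in> borel_measurable M" using XM KM by measurable
    show "(\<lambda>f. \<phi> i (X f) * K f) \<in> borel_measurable M" for i using XM KM unfolding \<phi>_def by measurable
    show "integrable M (\<lambda>_. 1::real)" using fm by (simp add: finite_measure.integrable_const)
    show "AE f in M. (\<lambda>i. \<phi> i (X f) * K f) \<longlonglongrightarrow> indicator {a..b} (X f) * K f"
      unfolding \<phi>_def by (intro AE_I2 tendsto_mult_right approx_ind)
    show "AE f in M. norm (\<phi> i (X f) * K f) \<le> 1" for i
    proof (rule AE_I2)
      fix f assume "f \<in> space M"
      then have "\<bar>K f\<bar> \<le> 1" using KM01 by auto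
      then show "norm (\<phi> i (X f) * K f) \<le> 1"
        using bndp[of i "X f"] mult_mono[of "\<bar>\<phi> i (X f)\<bar>" 1 "\<bar>K f\<bar>" 1] by (simp add: abs_mult)
    qed
  qed
  show ?thesis using LIMSEQ_unique[OF lim[OF fm1 Xm Km K01]] lim[OF fm2 Xm2 Km2 K01'] eqs by simp
qed

definition Cset :: "(real \<times> real \<times> real) list \<Rightarrow> (real \<Rightarrow>\<^sub>C real) set" where
  "Cset I = {f \<in> Cstar. \<forall>(y,a,b)\<in>set I. 1 - apply_bcontfun f y \<in> {a..b}}"

definition pref :: "nat \<Rightarrow> rat list \<Rightarrow> real \<Rightarrow> real" where
  "pref k v x = real_of_rat (v ! nat \<lfloor>real k * frac x\<rfloor>)"

definition Bs :: "nat \<times> rat list \<times> rat \<Rightarrow> (real \<Rightarrow>\<^sub>C real) set" where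
  "Bs i = (case i of (k,v,r) \<Rightarrow>
     \<Inter>q\<in>\<rat>. Cset [(q, 1 - pref k v q - real_of_rat r, 1 - pref k v q + real_of_rat r)])"

lemma Cstar_props:
  assumes "f \<in> Cstar"
  shows "\<forall>x. apply_bcontfun f (x + 1) = apply_bcontfun f x"
    "\<forall>x. 0 \<le> apply_bcontfun f x \<and> apply_bcontfun f x \<le> 1"
    "\<exists>x. apply_bcontfun f x \<noteq> 0" "\<exists>x. apply_bcontfun f x \<noteq> 1"
  using assms unfolding Cstar_def by auto

lemma Bs_mem:
  "f \<in> Bs (k,v,r) \<longleftrightarrow> f \<in> Cstar \<and> (\<forall>q\<in>\<rat>. \<bar>apply_bcontfun f q - pref k v q\<bar> \<le> real_of_rat r)"
proof -
  have "0 \<in> (\<rat>::real set)" by simp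
  then show ?thesis unfolding Bs_def Cset_def by (auto simp: abs_le_iff)
qed

lemma rat_approx:
  fixes x e :: real
  assumes "e > 0"
  shows "\<exists>q::rat. \<bar>real_of_rat q - x\<bar> < e"
proof -
  obtain r where r: "r \<in> \<rat>" "x < r" "r < x + e" using Rats_dense_in_real[of x "x + e"] assms by auto
  then obtain q where "r = real_of_rat q" by (auto elim: Rats_cases)
  then show ?thesis using r by (intro exI[of _ q]) auto
qed

lemma floor_frac_facts:
  fixes x :: real
  assumes k: "0 < k"
  defines "j \<equiv> nat \<lfloor>real k * frac x\<rfloor>"
  shows "j < k" "real j / real k \<le> frac x" "frac x < real j / real k + 1 / real k"
proof -
  have x1: "0 \<le> frac x" "frac x < 1" by (auto simp: frac_lt_1)
  have kpos: "real k > 0" using k by simp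
  have fl0: "0 \<le> \<lfloor>real k * frac x\<rfloor>" using x1 by simp
  have jle: "real j \<le> real k * frac x" unfolding j_def using fl0 by linarith
  have jgt: "real k * frac x < real j + 1" unfolding j_def using fl0 by linarith
  have "real k * frac x < real k" using x1 kpos by simp
  then show "j < k" using jle by linarith
  show "real j / real k \<le> frac x" using jle kpos by (simp add: field_simps)
  show "frac x < real j / real k + 1 / real k" using jgt kpos by (simp add: field_simps)
qed

lemma abs3:
  fixes a b p r e :: real
  assumes "\<bar>a - p\<bar> \<le> r" "\<bar>b - p\<bar> < e/4" "r < e/2" shows "\<bar>a - b\<bar> \<le> 3 * e / 4"
  using assms by arith

lemma open_approx:
  assumes U: "open U" and f: "f \<in> Cstar" "f \<in> U"
  shows "\<exists>i. f \<in> Bs i \<and> Bs i \<subseteq> U"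
proof -
  define F where "F = apply_bcontfun f"
  note per = Cstar_props(1)[OF f(1), folded F_def]
  obtain \<epsilon> where eps: "\<epsilon> > 0" "ball f \<epsilon> \<subseteq> U" using U f(2) open_contains_ball by blast
  have uc: "uniformly_continuous_on {0..1} F"
    unfolding F_def by (rule compact_uniformly_continuous) auto
  obtain \<delta> where del: "\<delta> > 0" "\<And>x x'. x \<in> {0..1} \<Longrightarrow> x' \<in> {0..1} \<Longrightarrow> dist x' x < \<delta> \<Longrightarrow> dist (F x') (F x) < \<epsilon>/8"
    using uc eps(1) unfolding uniformly_continuous_on_def by (metis divide_pos_pos zero_less_numeral)
  obtain k :: nat where kd: "1 / \<delta> < real k" using reals_Archimedean2 by blast
  have kpos: "0 < k" using kd del(1) by (metis divide_pos_pos of_nat_0 gr0I order.asym zero_less_one)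
  have kinv: "1 / real k < \<delta>" using kd del(1) kpos by (simp add: field_simps)
  define vfun where "vfun j = (SOME q::rat. \<bar>real_of_rat q - F (real j / real k)\<bar> < \<epsilon>/8)" for j :: nat
  have vfun: "\<bar>real_of_rat (vfun j) - F (real j / real k)\<bar> < \<epsilon>/8" for j
    unfolding vfun_def by (rule someI_ex, rule rat_approx) (use eps in simp)
  obtain r0 where r0: "r0 \<in> \<rat>" "\<epsilon>/4 < r0" "r0 < \<epsilon>/2" using Rats_dense_in_real[of "\<epsilon>/4" "\<epsilon>/2"] eps by auto
  then obtain r :: rat where r: "\<epsilon>/4 < real_of_rat r" "real_of_rat r < \<epsilon>/2" by (auto elim: Rats_cases)
  define v where "v = map vfun [0..<k]"
  have close: "\<bar>F x - pref k v x\<bar> < \<epsilon>/4" for x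
  proof -
    define j where "j = nat \<lfloor>real k * frac x\<rfloor>"
    note ff = floor_frac_facts[OF kpos, of x, folded j_def]
    have pj: "pref k v x = real_of_rat (vfun j)" unfolding pref_def v_def j_def[symmetric] using ff(1) by simp
    have fx: "F x = F (frac x)" using periodic_frac[OF per] by simp
    have in01: "frac x \<in> {0..1}" "real j / real k \<in> {0..1}"
      using ff(1) kpos by (auto simp: frac_lt_1 less_imp_le)
    have "dist (frac x) (real j / real k) < \<delta>"
      using ff(2,3) kinv by (simp add: dist_real_def)
    then have "dist (F (frac x)) (F (real j / real k)) < \<epsilon>/8" using del(2)[OF in01(2) in01(1)] by simp
    then have "\<bar>F x - F (real j / real k)\<bar> < \<epsilon>/8" using fx by (simp add: dist_real_def)
    then show ?thesis using vfun[of j] pj by linarith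
  qed
  define i where "i = (k, v, r)"
  have "\<bar>F q - pref k v q\<bar> \<le> real_of_rat r" for q
    using close[of q] r(1) by linarith
  then have fin: "f \<in> Bs i" unfolding i_def Bs_mem using f(1) by (simp add: F_def)
  have sub: "Bs i \<subseteq> U"
  proof
    fix h assume "h \<in> Bs i"
    then have h: "h \<in> Cstar" "\<forall>q\<in>\<rat>. \<bar>apply_bcontfun h q - pref k v q\<bar> \<le> real_of_rat r"
      unfolding i_def Bs_mem by auto
    define S where "S = {x. \<bar>apply_bcontfun h x - F x\<bar> \<le> 3 * \<epsilon> / 4}"
    have cS: "closed S" unfolding S_def F_def
      by (intro closed_Collect_le continuous_intros continuous_on_apply_bcontfun)
    have "\<rat> \<subseteq> S"
    proof
      fix q :: real assume "q \<in> \<rat>"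
      then have "\<bar>apply_bcontfun h q - pref k v q\<bar> \<le> real_of_rat r" using h(2) by auto
      then show "q \<in> S" unfolding S_def mem_Collect_eq using close[of q] r(2) by (rule abs3)
    qed
    then have "closure \<rat> \<subseteq> S" using cS by (rule closure_minimal)
    then have allS: "\<And>x. \<bar>apply_bcontfun h x - F x\<bar> \<le> 3 * \<epsilon> / 4" using Rats_closure_real unfolding S_def by auto
    have "dist h f \<le> 3 * \<epsilon> / 4"
      by (rule dist_bound) (use allS in \<open>simp add: dist_real_def F_def\<close>)
    then have "h \<in> ball f \<epsilon>" using eps(1) by (simp add: dist_commute)
    then show "h \<in> U" using eps(2) by auto
  qed
  show ?thesis using fin sub by blast
qed


definition Pg :: "real list \<Rightarrow> (real \<Rightarrow>\<^sub>C real) \<Rightarrow> real" where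
  "Pg w f = prod_list (map (\<lambda>y. 1 - apply_bcontfun f y) w)"
definition Pf :: "real list \<Rightarrow> (real \<Rightarrow>\<^sub>C real) \<Rightarrow> real" where
  "Pf u f = prod_list (map (\<lambda>y. apply_bcontfun f y) u)"
definition Ind :: "(real \<times> real \<times> real) list \<Rightarrow> (real \<Rightarrow>\<^sub>C real) \<Rightarrow> real" where
  "Ind I f = prod_list (map (\<lambda>(y,a,b). indicator {a..b} (1 - apply_bcontfun f y)) I)"
definition G :: "(real \<times> real \<times> real) list \<Rightarrow> real list \<Rightarrow> real list \<Rightarrow> (real \<Rightarrow>\<^sub>C real) \<Rightarrow> real" where
  "G I w u f = Ind I f * Pg w f * Pf u f"

lemma Pg_Nil[simp]: "Pg [] f = 1" by (simp add: Pg_def)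
lemma Pf_Nil[simp]: "Pf [] f = 1" by (simp add: Pf_def)
lemma Pg_simps: "Pg [] f = 1" "Pg (y # w) f = (1 - apply_bcontfun f y) * Pg w f"
  "Pg (w @ w') f = Pg w f * Pg w' f"
  by (simp_all add: Pg_def)
lemma Pf_simps: "Pf [] f = 1" "Pf (y # u) f = apply_bcontfun f y * Pf u f"
  "Pf (u @ u') f = Pf u f * Pf u' f"
  by (simp_all add: Pf_def)
lemma Ind_simps[simp]: "Ind [] f = 1"
  "Ind ((y,a,b) # I) f = indicator {a..b} (1 - apply_bcontfun f y) * Ind I f"
  by (simp_all add: Ind_def)

lemma cont_eval: "continuous_on UNIV (\<lambda>f::real \<Rightarrow>\<^sub>C real. apply_bcontfun f y)"
  unfolding continuous_on_iff
proof (intro ballI allI impI)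
  fix x :: "real \<Rightarrow>\<^sub>C real" and e :: real assume "e > 0"
  show "\<exists>d>0. \<forall>x'\<in>UNIV. dist x' x < d \<longrightarrow> dist (apply_bcontfun x' y) (apply_bcontfun x y) < e"
    using \<open>e > 0\<close> dist_bounded by (metis le_less_trans)
qed

lemma space_M:
  assumes "sets M = sets (restrict_space borel Cstar)"
  shows "space M = Cstar"
  using sets_eq_imp_space_eq[OF assms] by (simp add: space_restrict_space)

lemma meas_eval:
  assumes sM: "sets M = sets (restrict_space borel Cstar)"
  shows "(\<lambda>f. apply_bcontfun f y) \<in> borel_measurable M"
proof -
  have "(\<lambda>f. apply_bcontfun f y) \<in> borel_measurable (restrict_space borel Cstar)"
    by (intro measurable_restrict_space1 borel_measurable_continuous_onI cont_eval)
  then show ?thesis using measurable_cong_sets[OF sM refl, of borel] by blast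
qed

lemma meas_Pg:
  assumes sM: "sets M = sets (restrict_space borel Cstar)"
  shows "(\<lambda>f. Pg w f) \<in> borel_measurable M"
proof (induction w)
  case Nil then show ?case by simp
next
  case (Cons y w)
  show ?case unfolding Pg_simps
    by (intro borel_measurable_times borel_measurable_diff borel_measurable_const meas_eval[OF sM] Cons.IH)
qed

lemma meas_Pf:
  assumes sM: "sets M = sets (restrict_space borel Cstar)"
  shows "(\<lambda>f. Pf u f) \<in> borel_measurable M"
proof (induction u)
  case Nil then show ?case by simp
next
  case (Cons y u)
  show ?case unfolding Pf_simps
    by (intro borel_measurable_times meas_eval[OF sM] Cons.IH)
qed

lemma meas_Ind:
  assumes sM: "sets M = sets (restrict_space borel Cstar)"
  shows "(\<lambda>f. Ind I f) \<in> borel_measurable M"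
proof (induction I)
  case Nil then show ?case by simp
next
  case (Cons p I)
  obtain y a b where p: "p = (y,a,b)" by (cases p) auto
  have m1: "(\<lambda>f. 1 - apply_bcontfun f y) \<in> borel_measurable M"
    by (intro borel_measurable_diff borel_measurable_const meas_eval[OF sM])
  have m2: "(\<lambda>f. indicator {a..b} (1 - apply_bcontfun f y) :: real) \<in> borel_measurable M"
    by (rule measurable_compose[OF m1 borel_measurable_indicator]) simp
  show ?case unfolding p Ind_simps
    by (intro borel_measurable_times m2 Cons.IH)
qed

lemma meas_G:
  assumes sM: "sets M = sets (restrict_space borel Cstar)"
  shows "(\<lambda>f. G I w u f) \<in> borel_measurable M"
  unfolding G_def by (intro borel_measurable_times meas_Ind[OF sM] meas_Pg[OF sM] meas_Pf[OF sM])

lemma range_Pg: "f \<in> Cstar \<Longrightarrow> 0 \<le> Pg w f \<and> Pg w f \<le> 1"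
  unfolding Pg_def using Cstar_props(2)
  by (intro prod_list_01[of "\<lambda>y. 1 - apply_bcontfun f y"]) auto

lemma range_Pf: "f \<in> Cstar \<Longrightarrow> 0 \<le> Pf u f \<and> Pf u f \<le> 1"
  unfolding Pf_def using Cstar_props(2)
  by (intro prod_list_01[of "\<lambda>y. apply_bcontfun f y"]) auto

lemma range_Ind: "0 \<le> Ind I f \<and> Ind I f \<le> 1"
proof (induction I)
  case Nil then show ?case by simp
next
  case (Cons p I)
  obtain y a b where p: "p = (y,a,b)" by (cases p) auto
  show ?case unfolding p Ind_simps using Cons by (auto simp: indicator_def)
qed

lemma mult01: "0 \<le> (a::real) \<and> a \<le> 1 \<Longrightarrow> 0 \<le> b \<and> b \<le> 1 \<Longrightarrow> 0 \<le> a * b \<and> a * b \<le> 1"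
  by (auto intro: mult_le_one)

lemma range_G: "f \<in> Cstar \<Longrightarrow> 0 \<le> G I w u f \<and> G I w u f \<le> 1"
  unfolding G_def by (intro mult01 range_Ind range_Pg range_Pf)

lemma int01:
  assumes sM: "sets M = sets (restrict_space borel Cstar)" and fm: "finite_measure M"
    and m: "h \<in> borel_measurable M" and r: "\<And>f. f \<in> Cstar \<Longrightarrow> 0 \<le> h f \<and> h f \<le> (1::real)"
  shows "integrable M h"
  by (rule bounded_integrable[OF fm m, where B=1]) (use r space_M[OF sM] in auto)

lemma int_G: "sets M = sets (restrict_space borel Cstar) \<Longrightarrow> finite_measure M \<Longrightarrow> integrable M (\<lambda>f. G I w u f)"
  by (rule int01, assumption, assumption, rule meas_G, assumption, rule range_G)
lemma int_Pg: "sets M = sets (restrict_space borel Cstar) \<Longrightarrow> finite_measure M \<Longrightarrow> integrable M (\<lambda>f. Pg w f)"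
  by (rule int01, assumption, assumption, rule meas_Pg, assumption, rule range_Pg)
lemma int_Pf: "sets M = sets (restrict_space borel Cstar) \<Longrightarrow> finite_measure M \<Longrightarrow> integrable M (\<lambda>f. Pf w f)"
  by (rule int01, assumption, assumption, rule meas_Pf, assumption, rule range_Pf)
lemma int_PgPf: "sets M = sets (restrict_space borel Cstar) \<Longrightarrow> finite_measure M \<Longrightarrow> integrable M (\<lambda>f. Pg w f * Pf u f)"
  by (rule int01, assumption, assumption, intro borel_measurable_times meas_Pg meas_Pf, assumption, assumption,
      rule mult01, erule range_Pg, erule range_Pf)

lemma lim_grid:
  fixes H :: "(real \<Rightarrow>\<^sub>C real) \<Rightarrow> real \<Rightarrow> real"
  assumes sM: "sets M = sets (restrict_space borel Cstar)" and fm: "finite_measure M"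
    and h01: "\<And>f. f \<in> Cstar \<Longrightarrow> \<forall>y. 0 \<le> H f y \<and> H f y \<le> 1"
    and hper: "\<And>f. f \<in> Cstar \<Longrightarrow> \<forall>y. H f (y + 1) = H f y"
    and hcont: "\<And>f. continuous_on UNIV (H f)"
    and hex: "\<And>f. f \<in> Cstar \<Longrightarrow> \<exists>y. H f y \<noteq> 1"
    and hm: "\<And>k. (\<lambda>f. prod_list (map (H f) (grid k))) \<in> borel_measurable M"
  shows "(\<lambda>k. \<integral>f. prod_list (map (H f) (grid k)) \<partial>M) \<longlonglongrightarrow> 0"
proof -
  have "(\<lambda>k. \<integral>f. prod_list (map (H f) (grid k)) \<partial>M) \<longlonglongrightarrow> (\<integral>f. 0 \<partial>M)"
  proof (rule Bochner_Integration.integral_dominated_convergence[where w="\<lambda>_. 1" and f="\<lambda>f. 0"])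
    show "(\<lambda>f. 0::real) \<in> borel_measurable M" by simp
    show "(\<lambda>f. prod_list (map (H f) (grid k))) \<in> borel_measurable M" for k by (rule hm)
    show "integrable M (\<lambda>_. 1::real)" using fm by (simp add: finite_measure.integrable_const)
    show "AE f in M. (\<lambda>k. prod_list (map (H f) (grid k))) \<longlonglongrightarrow> 0"
      by (rule AE_I2, rule grid_limit) (use hcont h01 hper hex space_M[OF sM] in auto)
    show "AE f in M. norm (prod_list (map (H f) (grid k))) \<le> 1" for k
      by (rule AE_I2) (use prod_list_01[OF h01] space_M[OF sM] in auto)
  qed
  then show ?thesis by simp
qed


locale setting =
  fixes M1 M2 :: "(real \<Rightarrow>\<^sub>C real) measure"
  assumes s1: "sets M1 = sets (restrict_space borel Cstar)"
    and s2: "sets M2 = sets (restrict_space borel Cstar)"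
    and fm1: "finite_measure M1" and fm2: "finite_measure M2"
    and hyp: "\<And>xs ys. xs \<noteq> [] \<Longrightarrow> ys \<noteq> [] \<Longrightarrow>
           (\<integral>f. calE xs ys f \<partial>M1) = (\<integral>f. calE xs ys f \<partial>M2)"
begin

definition d :: "real list \<Rightarrow> real" where
  "d w = (\<integral>f. Pg w f \<partial>M1) - (\<integral>f. Pg w f \<partial>M2)"

lemma Pg_rep: "Pg (replicate k x @ w) f = (1 - apply_bcontfun f x) ^ k * Pg w f"
  by (induction k) (simp_all add: Pg_def)
lemma Pf_rep: "Pf (replicate k x @ w) f = apply_bcontfun f x ^ k * Pf w f"
  by (induction k) (simp_all add: Pf_def)

lemma B1:
  assumes "xs \<noteq> []" "ys \<noteq> []"
  shows "d (xs @ ys) = d xs"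
proof -
  have ce: "(\<lambda>f. calE xs ys f) = (\<lambda>f. Pg xs f - Pg (xs @ ys) f)"
    by (auto simp: fun_eq_iff calE_def Pg_def algebra_simps)
  have "(\<integral>f. Pg xs f - Pg (xs @ ys) f \<partial>M1) = (\<integral>f. Pg xs f - Pg (xs @ ys) f \<partial>M2)"
    using hyp[OF assms] unfolding ce .
  then have "(\<integral>f. Pg xs f \<partial>M1) - (\<integral>f. Pg (xs @ ys) f \<partial>M1) = (\<integral>f. Pg xs f \<partial>M2) - (\<integral>f. Pg (xs @ ys) f \<partial>M2)"
    using int_Pg[OF s1 fm1] int_Pg[OF s2 fm2] by simp
  then show ?thesis unfolding d_def by linarith
qed

lemma B3: "w \<noteq> [] \<Longrightarrow> d w = d [0]"
proof -
  assume "w \<noteq> []"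
  then obtain x r where w: "w = x # r" by (cases w) auto
  have "d w = d [x]"
  proof (cases "r = []")
    case True then show ?thesis using w by simp
  next
    case False then show ?thesis using B1[of "[x]" r] w by simp
  qed
  also have "\<dots> = d [x, 0]" using B1[of "[x]" "[0]"] by simp
  also have "\<dots> = d [0, x]"
  proof -
    have "Pg [x, 0] = Pg [0, x]" by (simp add: fun_eq_iff Pg_def mult_ac)
    then show ?thesis unfolding d_def by simp
  qed
  also have "\<dots> = d [0]" using B1[of "[0]" "[x]"] by simp
  finally show ?thesis .
qed

lemma grid_ne: "grid (Suc k) \<noteq> []"
  unfolding grid_def by simp

lemma d_const_zero:
  assumes lim: "(\<lambda>k. d (grid k)) \<longlonglongrightarrow> 0" and c: "\<And>k. d (grid (Suc k)) = c"
  shows "c = 0"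
proof -
  have "(\<lambda>k. d (grid (Suc k))) \<longlonglongrightarrow> 0" using LIMSEQ_Suc[OF lim] .
  then show ?thesis unfolding c LIMSEQ_const_iff .
qed

lemma B4: "w \<noteq> [] \<Longrightarrow> d w = 0"
proof -
  assume "w \<noteq> []"
  have lim: "(\<lambda>k. \<integral>f. Pg (grid k) f \<partial>M) \<longlonglongrightarrow> 0"
    if sM: "sets M = sets (restrict_space borel Cstar)" and fm: "finite_measure M" for M
  proof -
    have "(\<lambda>k. \<integral>f. prod_list (map ((\<lambda>f y. 1 - apply_bcontfun f y) f) (grid k)) \<partial>M) \<longlonglongrightarrow> 0"
    proof (rule lim_grid[OF sM fm])
      show "\<forall>y. 0 \<le> 1 - apply_bcontfun f y \<and> 1 - apply_bcontfun f y \<le> 1" if "f \<in> Cstar" for f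
        using Cstar_props(2)[OF that] by auto
      show "\<forall>y. 1 - apply_bcontfun f (y + 1) = 1 - apply_bcontfun f y" if "f \<in> Cstar" for f
        using Cstar_props(1)[OF that] by auto
      show "continuous_on UNIV (\<lambda>y. 1 - apply_bcontfun f y)" for f :: "real \<Rightarrow>\<^sub>C real"
        by (rule continuous_on_diff[OF continuous_on_const continuous_on_apply_bcontfun])
      show "\<exists>y. 1 - apply_bcontfun f y \<noteq> 1" if "f \<in> Cstar" for f
        using Cstar_props(3)[OF that] by auto
      show "(\<lambda>f. prod_list (map (\<lambda>y. 1 - apply_bcontfun f y) (grid k))) \<in> borel_measurable M" for k
        using meas_Pg[OF sM, of "grid k"] unfolding Pg_def .
    qed
    then show ?thesis unfolding Pg_def by simp
  qed
  have "(\<lambda>k. d (grid k)) \<longlonglongrightarrow> 0 - 0"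
    unfolding d_def by (intro tendsto_diff lim s1 s2 fm1 fm2)
  then have "(\<lambda>k. d (grid k)) \<longlonglongrightarrow> 0" by simp
  then have "d [0] = 0" by (rule d_const_zero) (rule B3[OF grid_ne])
  then show ?thesis using B3[OF \<open>w \<noteq> []\<close>] by simp
qed

lemma B5: "(\<integral>f. Pg w f * Pf u f \<partial>M1) - (\<integral>f. Pg w f * Pf u f \<partial>M2) = d w"
proof (induction u arbitrary: w)
  case Nil then show ?case unfolding d_def by simp
next
  case (Cons y u)
  have e: "(\<lambda>f. Pg w f * Pf (y # u) f) = (\<lambda>f. Pg w f * Pf u f - Pg (y # w) f * Pf u f)"
    by (auto simp: fun_eq_iff algebra_simps Pg_def Pf_def)
  have "(\<integral>f. Pg w f * Pf u f - Pg (y # w) f * Pf u f \<partial>M1) - (\<integral>f. Pg w f * Pf u f - Pg (y # w) f * Pf u f \<partial>M2)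
     = ((\<integral>f. Pg w f * Pf u f \<partial>M1) - (\<integral>f. Pg w f * Pf u f \<partial>M2))
       - ((\<integral>f. Pg (y # w) f * Pf u f \<partial>M1) - (\<integral>f. Pg (y # w) f * Pf u f \<partial>M2))"
    using int_PgPf[OF s1 fm1] int_PgPf[OF s2 fm2] by simp
  then show ?case unfolding e
    using Cons.IH[of w] Cons.IH[of "y # w"] B4[of "y # w"] by simp
qed

lemma B6: "d [] = 0"
proof -
  have lim: "(\<lambda>k. \<integral>f. Pf (grid k) f \<partial>M) \<longlonglongrightarrow> 0"
    if sM: "sets M = sets (restrict_space borel Cstar)" and fm: "finite_measure M" for M
  proof -
    have "(\<lambda>k. \<integral>f. prod_list (map ((\<lambda>f y. apply_bcontfun f y) f) (grid k)) \<partial>M) \<longlonglongrightarrow> 0"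
    proof (rule lim_grid[OF sM fm])
      show "\<forall>y. 0 \<le> apply_bcontfun f y \<and> apply_bcontfun f y \<le> 1" if "f \<in> Cstar" for f
        using Cstar_props(2)[OF that] by auto
      show "\<forall>y. apply_bcontfun f (y + 1) = apply_bcontfun f y" if "f \<in> Cstar" for f
        using Cstar_props(1)[OF that] by auto
      show "continuous_on UNIV (\<lambda>y. apply_bcontfun f y)" for f :: "real \<Rightarrow>\<^sub>C real"
        by (intro continuous_on_apply_bcontfun)
      show "\<exists>y. apply_bcontfun f y \<noteq> 1" if "f \<in> Cstar" for f
        using Cstar_props(4)[OF that] by auto
      show "(\<lambda>f. prod_list (map (\<lambda>y. apply_bcontfun f y) (grid k))) \<in> borel_measurable M" for k
        using meas_Pf[OF sM, of "grid k"] unfolding Pf_def .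
    qed
    then show ?thesis unfolding Pf_def by simp
  qed
  have eq: "d [] = (\<integral>f. Pf (grid k) f \<partial>M1) - (\<integral>f. Pf (grid k) f \<partial>M2)" for k
    using B5[of "[]" "grid k"] by simp
  have "(\<lambda>k. (\<integral>f. Pf (grid k) f \<partial>M1) - (\<integral>f. Pf (grid k) f \<partial>M2)) \<longlonglongrightarrow> 0 - 0"
    by (intro tendsto_diff lim s1 s2 fm1 fm2)
  then show ?thesis unfolding eq[symmetric] LIMSEQ_const_iff by simp
qed

lemma d_zero: "d w = 0"
  using B4 B6 by (cases "w = []") auto

lemma main_claim: "(\<integral>f. G I w u f \<partial>M1) = (\<integral>f. G I w u f \<partial>M2)"
proof (induction I arbitrary: w u)
  case Nil
  show ?case using B5[of w u] d_zero[of w] unfolding G_def by simp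
next
  case (Cons p I)
  obtain x a b where p: "p = (x,a,b)" by (cases p) auto
  have sp1: "space M1 = Cstar" by (rule space_M[OF s1])
  have mom: "(\<integral>f. (1 - apply_bcontfun f x) ^ k * (1 - (1 - apply_bcontfun f x)) ^ m * G I w u f \<partial>M1)
      = (\<integral>f. (1 - apply_bcontfun f x) ^ k * (1 - (1 - apply_bcontfun f x)) ^ m * G I w u f \<partial>M2)" for k m
  proof -
    have e: "(\<lambda>f. (1 - apply_bcontfun f x) ^ k * (1 - (1 - apply_bcontfun f x)) ^ m * G I w u f)
        = (\<lambda>f. G I (replicate k x @ w) (replicate m x @ u) f)"
    proof
      fix f
      have "(1 - apply_bcontfun f x) ^ k * (1 - (1 - apply_bcontfun f x)) ^ m * G I w u f
          = Ind I f * ((1 - apply_bcontfun f x) ^ k * Pg w f) * (apply_bcontfun f x ^ m * Pf u f)"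
        unfolding G_def by (simp add: ac_simps)
      then show "(1 - apply_bcontfun f x) ^ k * (1 - (1 - apply_bcontfun f x)) ^ m * G I w u f
          = G I (replicate k x @ w) (replicate m x @ u) f"
        unfolding G_def Pg_rep Pf_rep .
    qed
    show ?thesis unfolding e by (rule Cons.IH)
  qed
  have L: "(\<integral>f. indicator {a..b} (1 - apply_bcontfun f x) * G I w u f \<partial>M1)
        = (\<integral>f. indicator {a..b} (1 - apply_bcontfun f x) * G I w u f \<partial>M2)"
  proof (rule L1[OF fm1 fm2])
    show "sets M1 = sets M2" using s1 s2 by simp
    show "(\<lambda>f. 1 - apply_bcontfun f x) \<in> borel_measurable M1"
      by (intro borel_measurable_diff borel_measurable_const meas_eval[OF s1])
    show "(\<lambda>f. G I w u f) \<in> borel_measurable M1" by (rule meas_G[OF s1])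
    show "\<forall>f\<in>space M1. 0 \<le> 1 - apply_bcontfun f x \<and> 1 - apply_bcontfun f x \<le> 1"
      using Cstar_props(2) sp1 by auto
    show "\<forall>f\<in>space M1. 0 \<le> G I w u f \<and> G I w u f \<le> 1"
      using range_G sp1 by auto
  qed (rule mom)
  have e2: "(\<lambda>f. G (p # I) w u f) = (\<lambda>f. indicator {a..b} (1 - apply_bcontfun f x) * G I w u f)"
    by (simp add: fun_eq_iff G_def p mult.assoc)
  show ?case unfolding e2 by (rule L)
qed

end


lemma Cset_Nil: "Cset [] = Cstar" unfolding Cset_def by simp

lemma Cset_Cons: "Cset ((y,a,b) # K) = {f. 1 - apply_bcontfun f y \<in> {a..b}} \<inter> Cset K"
  unfolding Cset_def by auto

lemma Ind_eq: "f \<in> Cstar \<Longrightarrow> Ind I f = indicator (Cset I) f"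
proof (induction I)
  case Nil then show ?case by (simp add: Cset_Nil)
next
  case (Cons p I)
  obtain y a b where p: "p = (y,a,b)" by (cases p) auto
  have "indicator {f. 1 - apply_bcontfun f y \<in> {a..b}} f = (indicator {a..b} (1 - apply_bcontfun f y) :: real)"
    by (simp add: indicator_def)
  then show ?case unfolding p Ind_simps Cset_Cons indicator_inter_arith using Cons by simp
qed

lemma Cset_sub: "Cset I \<subseteq> Cstar" unfolding Cset_def by auto

lemma Cset_sets:
  assumes sM: "sets M = sets (restrict_space borel Cstar)"
  shows "Cset I \<in> sets M"
proof -
  have iff: "f \<in> Cset I \<longleftrightarrow> f \<in> space M \<and> Ind I f = 1" for f
  proof (cases "f \<in> Cstar")
    case True
    then show ?thesis using Ind_eq[OF True, of I] space_M[OF sM] by (simp add: indicator_eq_1_iff)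
  next
    case False
    then show ?thesis using Cset_sub[of I] space_M[OF sM] by blast
  qed
  have "Cset I = (\<lambda>f. Ind I f) -` {1} \<inter> space M"
    using iff by blast
  also have "\<dots> \<in> sets M"
    by (rule measurable_sets[OF meas_Ind[OF sM]]) simp
  finally show ?thesis .
qed

lemma Cset_append: "Cset (I @ J) = Cset I \<inter> Cset J"
proof (induction I)
  case Nil then show ?case using Cset_sub[of J] by (auto simp: Cset_def)
next
  case (Cons p I)
  obtain y a b where p: "p = (y,a,b)" by (cases p) auto
  show ?case unfolding p append_Cons Cset_Cons Cons.IH by (simp add: Int_assoc)
qed

lemma Bs_sigma: "Bs i \<in> sigma_sets Cstar (range Cset)"
proof -
  interpret S: sigma_algebra Cstar "sigma_sets Cstar (range Cset)"
    by (rule sigma_algebra_sigma_sets) (auto simp: Cset_def)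
  obtain k v r where i: "i = (k, v, r)" by (cases i) auto
  have ne: "(\<rat>::real set) \<noteq> {}" using Rats_0 by blast
  show ?thesis unfolding i Bs_def prod.case
    by (rule S.countable_INT'[OF countable_rat ne], rule image_subsetI, rule sigma_sets.Basic, rule rangeI)
qed

lemma open_sigma:
  assumes "open U"
  shows "Cstar \<inter> U \<in> sigma_sets Cstar (range Cset)"
proof -
  interpret S: sigma_algebra Cstar "sigma_sets Cstar (range Cset)"
    by (rule sigma_algebra_sigma_sets) (auto simp: Cset_def)
  have eq: "Cstar \<inter> U = (\<Union>i\<in>{i. Bs i \<subseteq> U}. Bs i)"
  proof
    show "Cstar \<inter> U \<subseteq> (\<Union>i\<in>{i. Bs i \<subseteq> U}. Bs i)"
      using open_approx[OF assms] by blast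
    show "(\<Union>i\<in>{i. Bs i \<subseteq> U}. Bs i) \<subseteq> Cstar \<inter> U"
    proof
      fix f assume "f \<in> (\<Union>i\<in>{i. Bs i \<subseteq> U}. Bs i)"
      then obtain i where "Bs i \<subseteq> U" "f \<in> Bs i" by auto
      moreover obtain k v r where i: "i = (k, v, r)" by (cases i) auto
      ultimately show "f \<in> Cstar \<inter> U" using Bs_mem by auto
    qed
  qed
  show ?thesis unfolding eq
    by (rule S.countable_UN''[OF countableI_type Bs_sigma])
qed

lemma sets_gen: "sets (restrict_space borel Cstar) = sigma_sets Cstar (range Cset)"
proof
  have "range Cset \<subseteq> sets (restrict_space borel Cstar)" using Cset_sets[OF refl] by blast
  from sets.sigma_sets_subset[OF this]
  show "sigma_sets Cstar (range Cset) \<subseteq> sets (restrict_space borel Cstar)"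
    by (simp add: space_restrict_space)
  show "sets (restrict_space borel Cstar) \<subseteq> sigma_sets Cstar (range Cset)"
  proof
    fix X assume "X \<in> sets (restrict_space borel Cstar)"
    then obtain A where A: "A \<in> sets borel" "X = Cstar \<inter> A"
      unfolding sets_restrict_space by auto
    have "A \<in> sigma_sets UNIV {S. open S}" using A(1) unfolding sets_borel .
    then have "Cstar \<inter> A \<in> sigma_sets Cstar (range Cset)"
    proof (induction rule: sigma_sets.induct)
      case (Basic a) then show ?case using open_sigma by auto
    next
      case Empty then show ?case by (simp add: sigma_sets.Empty)
    next
      case (Compl a)
      have "Cstar \<inter> (UNIV - a) = Cstar - (Cstar \<inter> a)" by auto
      then show ?case using sigma_sets.Compl[OF Compl.IH] by simp
    next
      case (Union a)
      have "Cstar \<inter> \<Union> (range a) = (\<Union>i. Cstar \<inter> a i)" by auto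
      then show ?case using sigma_sets.Union[of "\<lambda>i. Cstar \<inter> a i", OF Union.IH] by simp
    qed
    then show "X \<in> sigma_sets Cstar (range Cset)" using A(2) by simp
  qed
qed

context setting
begin

lemma emeq: "X \<in> range Cset \<Longrightarrow> emeasure M1 X = emeasure M2 X"
proof -
  assume "X \<in> range Cset"
  then obtain I where X: "X = Cset I" by auto
  have m: "measure M (Cset I) = (\<integral>f. G I [] [] f \<partial>M)"
    if sM: "sets M = sets (restrict_space borel Cstar)" for M
  proof -
    have "(\<integral>f. G I [] [] f \<partial>M) = (\<integral>f. indicator (Cset I) f \<partial>M)"
    proof (rule Bochner_Integration.integral_cong[OF refl])
      fix x assume "x \<in> space M"
      then have "x \<in> Cstar" using space_M[OF sM] by simp
      then show "G I [] [] x = indicator (Cset I) x" by (simp add: G_def Ind_eq)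
    qed
    also have "\<dots> = measure M (Cset I)"
      using Cset_sub space_M[OF sM] by (simp add: Int_absorb2)
    finally show ?thesis by simp
  qed
  have meq: "measure M1 (Cset I) = measure M2 (Cset I)"
    using m[OF s1] m[OF s2] main_claim[of I "[]" "[]"] by simp
  have e1: "emeasure M1 (Cset I) = ennreal (measure M1 (Cset I))"
    by (rule finite_measure.emeasure_eq_measure[OF fm1])
  have e2: "emeasure M2 (Cset I) = ennreal (measure M2 (Cset I))"
    by (rule finite_measure.emeasure_eq_measure[OF fm2])
  show "emeasure M1 X = emeasure M2 X"
    unfolding X e1 e2 meq by (rule refl)
qed

lemma Int_stable_Cset: "Int_stable (range Cset)"
proof (rule Int_stableI)
  fix a b assume "a \<in> range Cset" "b \<in> range Cset"
  then obtain I J where "a = Cset I" "b = Cset J" by auto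
  moreover have "Cset I \<inter> Cset J = Cset (I @ J)" by (rule Cset_append[symmetric])
  ultimately show "a \<inter> b \<in> range Cset" by auto
qed

lemma eq_meas: "M1 = M2"
proof -
  have h2: "range Cset \<subseteq> Pow Cstar" using Cset_sub by auto
  have h4: "sets M1 = sigma_sets Cstar (range Cset)" using s1 sets_gen by simp
  have h5: "sets M2 = sigma_sets Cstar (range Cset)" using s2 sets_gen by simp
  have h6: "range (\<lambda>_::nat. Cstar) \<subseteq> range Cset"
  proof -
    have "Cstar = Cset []" by (simp add: Cset_Nil)
    then show ?thesis by auto
  qed
  have h7: "(\<Union>i::nat. Cstar) = Cstar" by simp
  have h8: "emeasure M1 Cstar \<noteq> \<infinity>" using fm1 by (simp add: finite_measure.emeasure_finite)
  show ?thesis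
    apply (rule measure_eqI_generator_eq[where \<Omega>=Cstar and E="range Cset" and A="\<lambda>_. Cstar"])
    apply (rule Int_stable_Cset)
    apply (rule h2)
    apply (erule emeq)
    apply (rule h4)
    apply (rule h5)
    apply (rule h6)
    apply (rule h7)
    apply (rule h8)
    done
qed

end

theorem lemma3p3:
  fixes M1 M2 :: "(real \<Rightarrow>\<^sub>C real) measure"
  assumes "sets M1 = sets (restrict_space borel Cstar)"
    and "sets M2 = sets (restrict_space borel Cstar)"
    and "finite_measure M1" and "finite_measure M2"
    and "\<And>xs ys. xs \<noteq> [] \<Longrightarrow> ys \<noteq> [] \<Longrightarrow>
           (\<integral>f. calE xs ys f \<partial>M1) = (\<integral>f. calE xs ys f \<partial>M2)"
  shows "M1 = M2"
proof -
  interpret setting M1 M2 by (rule setting.intro[OF assms])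
  show ?thesis by (rule eq_meas)
qed

end
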